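(* In the finite-sum setting, run Algorithm LCSVRG with parameter $\gamma$ and let $\beta\in(0,2\gamma-L_0)$ be such that $$\tilde L:=\frac{2\gamma-\beta-L_0}{2}-\frac{L_0^2(T-1)}{2\beta b}>0.$$ Then, with $x^{(r,t)}:=x^{rT+t}$, for every epoch $r\ge0$ and every $0\le t<T$, $$\tilde L\sum_{j=0}^t\mathbb{E}\|x^{(r,j+1)}-x^{(r,j)}\|^2\le\mathbb{E}[\psi_0(x^{(r,0)})]-\mathbb{E}[\psi_0(x^{(r,t+1)})].$$
   Context: Problem (P): minimize $\psi_0(x):=f_0(x)+\chi_0(x)$ over $x\in\mathbb{R}^d$ subject to $\psi_i(x):=f_i(x)+\chi_i(x)\le\eta_i$, $i\in[m]:=\{1,\dots,m\}$, with $\chi_0$ proper convex lsc, $\chi_i$ convex continuous on $\mathrm{dom}\,\chi_0$, $f_i$ with $L_i$-Lipschitz gradients, finite optimal value, and nonempty compact feasible set; vector inequalities componentwise. Finite-sum setting: $f_0(x)=\frac1n\sum_{j=1}^nF(x,\xi_j)$ where each $F(\cdot,\xi_j)$ has $L_0$-Lipschitz gradient. Algorithm LCSVRG: given $x^0\in\mathrm{dom}\,\chi_0$, $\eta^0$ with $\psi(x^0)<\eta^0<\eta$, epoch length $T$, batch size $b$, $\gamma>0$. At step $k$: if $k$ is a multiple of $T$, set $G^k=\nabla f_0(x^k)$; otherwise draw a mini-batch $B_k$ of $b$ indices independently and uniformly from $\{1,\dots,n\}$ and set $G^k=\frac1b\sum_{j\in B_k}[\nabla F(x^k,\xi_j)-\nabla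 F(x^{k-1},\xi_j)]+G^{k-1}$. Set $\psi_0^k(x)=\langle G^k,x\rangle+\frac{\gamma}{2}\|x-x^k\|^2+\chi_0(x)$, $\psi_i^k(x)=f_i(x^k)+\langle\nabla f_i(x^k),x-x^k\rangle+\frac{L_i}{2}\|x-x^k\|^2+\chi_i(x)$ ($i\in[m]$), let $x^{k+1}$ minimize $\psi_0^k$ subject to $\psi_i^k(x)\le\eta_i^k$, $i\in[m]$, and set $\eta^{k+1}=\eta^k+\delta^k$ with $\delta^k>0$, $\eta^{k+1}<\eta$. *)

theory Defs
  imports "HOL-Analysis.Analysis" "HOL-Probability.Probability"
begin

text \<open>A sample is a function \<omega>, where \<omega> k l \<in> {0..<n} is the l-th index
  (l < b) of the mini-batch B_k drawn at step k; all indices are drawn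
  independently and uniformly from {0..<n} (the samples xi_1..xi_n are
  re-indexed as 0..n-1). Iterate x^k only depends on \<omega> j for j < k.\<close>
definition lcsvrg_batches :: "nat \<Rightarrow> nat \<Rightarrow> nat \<Rightarrow> (nat \<Rightarrow> nat \<Rightarrow> nat) pmf" where
  "lcsvrg_batches n b K =
     Pi_pmf {..<K} (\<lambda>_. 0) (\<lambda>_. Pi_pmf {..<b} 0 (\<lambda>_. pmf_of_set {..<n}))"

end

theory Submission
  imports Defs
begin


lemma quad_id0:
  fixes a w :: "'a::real_inner"
  shows "(norm (a + \<tau> *\<^sub>R w))\<^sup>2
       = (1 - \<tau>) * (norm a)\<^sup>2 + \<tau> * (norm (a + w))\<^sup>2 - \<tau> * (1 - \<tau>) * (norm w)\<^sup>2"
  by (simp only: power2_norm_eq_inner inner_add_left inner_add_right inner_scaleR_left inner_scaleR_right inner_commute[of w a])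
       (simp add: algebra_simps power2_eq_square)

lemma quad_id:
  fixes u y c :: "'a::real_inner"
  shows "(norm ((u + \<tau> *\<^sub>R (y - u)) - c))\<^sup>2
       = (1 - \<tau>) * (norm (u - c))\<^sup>2 + \<tau> * (norm (y - c))\<^sup>2 - \<tau> * (1 - \<tau>) * (norm (y - u))\<^sup>2"
proof -
  have e1: "(u + \<tau> *\<^sub>R (y - u)) - c = (u - c) + \<tau> *\<^sub>R (y - u)" by (simp add: algebra_simps)
  have e2: "y - c = (u - c) + (y - u)" by simp
  show ?thesis unfolding e1 by (subst e2) (rule quad_id0)
qed

lemma small_tau:
  fixes a B :: real
  assumes "B \<ge> 0" and h: "\<And>\<tau>. 0 < \<tau> \<Longrightarrow> \<tau> \<le> 1 \<Longrightarrow> 0 \<le> a + \<tau> * B"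
  shows "0 \<le> a"
proof (rule ccontr)
  assume "\<not> 0 \<le> a"
  hence a: "a < 0" by simp
  define \<tau> where "\<tau> = min 1 (- a / (2 * (B + 1)))"
  have t0: "0 < \<tau>" using a assms(1) by (simp add: \<tau>_def divide_neg_pos)
  have t1: "\<tau> \<le> 1" by (simp add: \<tau>_def)
  have "\<tau> * B \<le> (- a / (2 * (B + 1))) * B" using assms(1) by (intro mult_right_mono) (auto simp: \<tau>_def)
  also have "\<dots> < - a"
  proof -
    have "(- a / (2 * (B + 1))) * B = (-a) * (B / (2*(B+1)))" by simp
    also have "\<dots> < (-a) * 1" using a assms(1) by (intro mult_strict_left_mono) (auto simp: field_simps)
    finally show ?thesis by simp
  qed
  finally have "a + \<tau> * B < 0" by simp
  with h[OF t0 t1] show False by simp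
qed

lemma descent:
  fixes f :: "'a::euclidean_space \<Rightarrow> real"
  assumes der: "\<And>y. (f has_derivative (\<lambda>h. g y \<bullet> h)) (at y)"
    and lip: "\<And>y z. norm (g y - g z) \<le> L * norm (y - z)"
  shows "f y \<le> f x + g x \<bullet> (y - x) + L / 2 * (norm (y - x))\<^sup>2"
proof -
  define d where "d = y - x"
  define \<phi> where "\<phi> s = f (x + s *\<^sub>R d) - s * (g x \<bullet> d) - L / 2 * s\<^sup>2 * (norm d)\<^sup>2" for s
  define \<phi>' where "\<phi>' s = g (x + s *\<^sub>R d) \<bullet> d - g x \<bullet> d - L * s * (norm d)\<^sup>2" for s
  have D: "(\<phi> has_real_derivative \<phi>' s) (at s)" for s
  proof -
    have f1: "((\<lambda>s. f (x + s *\<^sub>R d)) has_derivative (\<lambda>h. g (x + s *\<^sub>R d) \<bullet> (h *\<^sub>R d))) (at s)"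
    proof -
      have "((\<lambda>s. x + s *\<^sub>R d) has_derivative (\<lambda>h. h *\<^sub>R d)) (at s)"
        by (auto intro!: derivative_eq_intros)
      from has_derivative_compose[OF this der] show ?thesis .
    qed
    have f2: "((\<lambda>s. f (x + s *\<^sub>R d)) has_real_derivative (g (x + s *\<^sub>R d) \<bullet> d)) (at s)"
    proof -
      have eq: "(\<lambda>h. g (x + s *\<^sub>R d) \<bullet> (h *\<^sub>R d)) = (*) (g (x + s *\<^sub>R d) \<bullet> d)"
        by (rule ext) (simp add: mult.commute)
      show ?thesis unfolding has_field_derivative_def using f1 by (simp only: eq)
    qed
    show ?thesis unfolding \<phi>_def[abs_def] \<phi>'_def
      by (rule derivative_eq_intros f2 | simp)+
  qed
  have nonpos: "\<phi>' s \<le> 0" if "0 \<le> s" for s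
  proof -
    have "(g (x + s *\<^sub>R d) - g x) \<bullet> d \<le> norm (g (x + s *\<^sub>R d) - g x) * norm d"
      by (rule norm_cauchy_schwarz)
    also have "\<dots> \<le> (L * norm (s *\<^sub>R d)) * norm d"
      using lip[of "x + s *\<^sub>R d" x] by (intro mult_right_mono) auto
    also have "\<dots> = L * s * (norm d)\<^sup>2" using that by (simp add: power2_eq_square)
    finally show ?thesis by (simp add: \<phi>'_def inner_diff_left)
  qed
  obtain z where z: "0 < z" "z < 1" "\<phi> 1 - \<phi> 0 = (1 - 0) * \<phi>' z"
    using MVT2[of 0 1 \<phi> \<phi>'] D by auto
  hence "\<phi> 1 \<le> \<phi> 0" using nonpos[of z] by simp
  thus ?thesis by (simp add: \<phi>_def d_def)
qed



lemma three_point: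
  fixes u y c :: "'a::real_inner" and \<phi> :: "'a \<Rightarrow> real"
  assumes g0: "\<gamma> \<ge> 0"
    and segS: "\<And>\<tau>. 0 < \<tau> \<Longrightarrow> \<tau> \<le> 1 \<Longrightarrow> u + \<tau> *\<^sub>R (y - u) \<in> S"
    and cvx: "\<And>\<tau>. 0 < \<tau> \<Longrightarrow> \<tau> \<le> 1 \<Longrightarrow> \<phi> (u + \<tau> *\<^sub>R (y - u)) \<le> (1 - \<tau>) * \<phi> u + \<tau> * \<phi> y"
    and opt: "\<And>z. z \<in> S \<Longrightarrow> \<phi> u + \<gamma> / 2 * (norm (u - c))\<^sup>2 \<le> \<phi> z + \<gamma> / 2 * (norm (z - c))\<^sup>2"
  shows "\<phi> u + \<gamma> / 2 * (norm (u - c))\<^sup>2 + \<gamma> / 2 * (norm (y - u))\<^sup>2 \<le> \<phi> y + \<gamma> / 2 * (norm (y - c))\<^sup>2"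
proof -
  define a where "a = \<phi> y - \<phi> u + \<gamma> / 2 * ((norm (y - c))\<^sup>2 - (norm (u - c))\<^sup>2 - (norm (y - u))\<^sup>2)"
  define B where "B = \<gamma> / 2 * (norm (y - u))\<^sup>2"
  have "0 \<le> a"
  proof (rule small_tau[of B])
    show "0 \<le> B" using g0 by (simp add: B_def)
    fix \<tau> :: real assume t: "0 < \<tau>" "\<tau> \<le> 1"
    define z where "z = u + \<tau> *\<^sub>R (y - u)"
    have "\<phi> u + \<gamma> / 2 * (norm (u - c))\<^sup>2 \<le> \<phi> z + \<gamma> / 2 * (norm (z - c))\<^sup>2"
      using opt segS[OF t] by (simp add: z_def)
    also have "\<dots> \<le> (1 - \<tau>) * \<phi> u + \<tau> * \<phi> y + \<gamma> / 2 * ((1 - \<tau>) * (norm (u - c))\<^sup>2 + \<tau> * (norm (y - c))\<^sup>2 - \<tau> * (1 - \<tau>) * (norm (y - u))\<^sup>2)"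
      using cvx[OF t] unfolding z_def quad_id by simp
    finally have "0 \<le> \<tau> * (a + \<tau> * B)"
      by (simp add: a_def B_def algebra_simps)
    thus "0 \<le> a + \<tau> * B" using t by (simp add: zero_le_mult_iff)
  qed
  moreover have "\<gamma> / 2 * ((norm (y - c))\<^sup>2 - (norm (u - c))\<^sup>2 - (norm (y - u))\<^sup>2)
     = \<gamma> / 2 * (norm (y - c))\<^sup>2 - \<gamma> / 2 * (norm (u - c))\<^sup>2 - \<gamma> / 2 * (norm (y - u))\<^sup>2"
    by (simp add: algebra_simps)
  ultimately show ?thesis unfolding a_def by linarith
qed

lemma finite_set_Pi_pmf:
  assumes "finite A" "\<And>x. x \<in> A \<Longrightarrow> finite (set_pmf (p x))"
  shows "finite (set_pmf (Pi_pmf A d p))"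
  using assms by (simp add: set_Pi_pmf finite_PiE_dflt)

lemma exp_pair_swap:
  fixes f :: "'a \<times> 'b \<Rightarrow> real"
  assumes fA: "finite (set_pmf A)" and fB: "finite (set_pmf B)"
  shows "measure_pmf.expectation (pair_pmf A B) f
       = measure_pmf.expectation B (\<lambda>b. measure_pmf.expectation A (\<lambda>a. f (a, b)))"
proof -
  have "measure_pmf.expectation (pair_pmf A B) f = (\<Sum>p\<in>set_pmf A \<times> set_pmf B. f p * pmf (pair_pmf A B) p)"
    using fA fB by (intro integral_measure_pmf_real) auto
  also have "\<dots> = (\<Sum>a\<in>set_pmf A. \<Sum>b\<in>set_pmf B. f (a, b) * pmf A a * pmf B b)"
    by (subst sum.cartesian_product) (auto intro!: sum.cong simp: pmf_pair mult.assoc)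
  also have "\<dots> = (\<Sum>b\<in>set_pmf B. \<Sum>a\<in>set_pmf A. f (a, b) * pmf A a * pmf B b)"
    by (rule sum.swap)
  also have "\<dots> = (\<Sum>b\<in>set_pmf B. (\<Sum>a\<in>set_pmf A. f (a, b) * pmf A a) * pmf B b)"
    by (simp add: sum_distrib_right)
  also have "\<dots> = measure_pmf.expectation B (\<lambda>b. measure_pmf.expectation A (\<lambda>a. f (a, b)))"
  proof -
    have "measure_pmf.expectation A (\<lambda>a. f (a, b)) = (\<Sum>a\<in>set_pmf A. f (a, b) * pmf A a)" for b
      using fA by (intro integral_measure_pmf_real) auto
    moreover have "measure_pmf.expectation B (\<lambda>b. measure_pmf.expectation A (\<lambda>a. f (a, b)))
        = (\<Sum>b\<in>set_pmf B. measure_pmf.expectation A (\<lambda>a. f (a, b)) * pmf B b)"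
      using fB by (intro integral_measure_pmf_real) auto
    ultimately show ?thesis by simp
  qed
  finally show ?thesis .
qed

lemma Pi_split:
  fixes h :: "('i \<Rightarrow> 'b) \<Rightarrow> real"
  assumes fA: "finite A" and kA: "k \<in> A" and fp: "\<And>x. x \<in> A \<Longrightarrow> finite (set_pmf (p x))"
  shows "measure_pmf.expectation (Pi_pmf A d p) h
       = measure_pmf.expectation (Pi_pmf (A - {k}) d p) (\<lambda>om. measure_pmf.expectation (p k) (\<lambda>c. h (om(k := c))))"
proof -
  have A: "A = insert k (A - {k})" using kA by auto
  have "Pi_pmf A d p = map_pmf (\<lambda>(y,f). f(k:=y)) (pair_pmf (p k) (Pi_pmf (A - {k}) d p))"
    by (subst A, rule Pi_pmf_insert) (use fA in auto)
  hence "measure_pmf.expectation (Pi_pmf A d p) h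
       = measure_pmf.expectation (pair_pmf (p k) (Pi_pmf (A - {k}) d p)) (\<lambda>(y,f). h (f(k:=y)))"
    by (simp add: case_prod_unfold)
  also have "\<dots> = measure_pmf.expectation (Pi_pmf (A - {k}) d p) (\<lambda>om. measure_pmf.expectation (p k) (\<lambda>c. h (om(k := c))))"
  proof -
    have f1: "finite (set_pmf (p k))" using fp kA by auto
    have f2: "finite (set_pmf (Pi_pmf (A - {k}) d p))" using fA fp by (intro finite_set_Pi_pmf) auto
    show ?thesis using exp_pair_swap[OF f1 f2, of "\<lambda>(y,f). h (f(k:=y))"] by simp
  qed
  finally show ?thesis .
qed

lemma sum_norm_sq_shift:
  fixes w :: "'a::real_inner" and z :: "nat \<Rightarrow> 'a"
  assumes "(\<Sum>i<n. z i) = 0"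
  shows "(\<Sum>i<n. (norm (w + z i))\<^sup>2) = real n * (norm w)\<^sup>2 + (\<Sum>i<n. (norm (z i))\<^sup>2)"
proof -
  have "(\<Sum>i<n. (norm (w + z i))\<^sup>2) = (\<Sum>i<n. (norm w)\<^sup>2 + 2 * (w \<bullet> z i) + (norm (z i))\<^sup>2)"
    by (intro sum.cong refl) (simp add: power2_norm_eq_inner inner_add_left inner_add_right inner_commute)
  also have "\<dots> = real n * (norm w)\<^sup>2 + 2 * (w \<bullet> (\<Sum>i<n. z i)) + (\<Sum>i<n. (norm (z i))\<^sup>2)"
    by (simp add: sum.distrib sum_distrib_left inner_sum_right)
  finally show ?thesis using assms by simp
qed

lemma indep_sum:
  fixes v :: "'a::real_inner" and z :: "nat \<Rightarrow> 'a"
  assumes fA: "finite A" and n: "n \<ge> 1" and z0: "(\<Sum>i<n. z i) = 0"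
  shows "measure_pmf.expectation (Pi_pmf A d (\<lambda>_. pmf_of_set {..<n})) (\<lambda>c. (norm (v + (\<Sum>l\<in>A. z (c l))))\<^sup>2)
       = (norm v)\<^sup>2 + real (card A) * ((\<Sum>i<n. (norm (z i))\<^sup>2) / real n)"
  using fA
proof (induction A rule: finite_induct)
  case empty
  then show ?case by simp
next
  case (insert x A)
  let ?U = "pmf_of_set {..<n::nat}"
  have fU: "finite (set_pmf ?U)" using n by (subst set_pmf_of_set) (auto simp: lessThan_empty_iff)
  have fP: "finite (set_pmf (Pi_pmf A d (\<lambda>_. ?U)))" using insert.hyps fU by (intro finite_set_Pi_pmf) auto
  have "measure_pmf.expectation (Pi_pmf (insert x A) d (\<lambda>_. ?U)) (\<lambda>c. (norm (v + (\<Sum>l\<in>insert x A. z (c l))))\<^sup>2)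
     = measure_pmf.expectation (pair_pmf ?U (Pi_pmf A d (\<lambda>_. ?U)))
         (\<lambda>(y,f). (norm (v + (\<Sum>l\<in>insert x A. z ((f(x:=y)) l))))\<^sup>2)"
    using insert.hyps by (simp add: Pi_pmf_insert case_prod_unfold)
  also have "\<dots> = measure_pmf.expectation (pair_pmf ?U (Pi_pmf A d (\<lambda>_. ?U)))
         (\<lambda>(y,f). (norm ((v + (\<Sum>l\<in>A. z (f l))) + z y))\<^sup>2)"
  proof -
    have "(\<Sum>l\<in>insert x A. z ((f(x:=y)) l)) = z y + (\<Sum>l\<in>A. z (f l))" for f y
    proof -
      have "(\<Sum>l\<in>A. z ((f(x:=y)) l)) = (\<Sum>l\<in>A. z (f l))"
        using insert.hyps by (intro sum.cong) auto
      thus ?thesis using insert.hyps by simp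
    qed
    thus ?thesis by (simp add: algebra_simps)
  qed
  also have "\<dots> = measure_pmf.expectation (Pi_pmf A d (\<lambda>_. ?U))
      (\<lambda>f. measure_pmf.expectation ?U (\<lambda>y. (norm ((v + (\<Sum>l\<in>A. z (f l))) + z y))\<^sup>2))"
    by (subst exp_pair_swap[OF fU fP]) simp
  also have "\<dots> = measure_pmf.expectation (Pi_pmf A d (\<lambda>_. ?U))
      (\<lambda>f. (norm (v + (\<Sum>l\<in>A. z (f l))))\<^sup>2 + (\<Sum>i<n. (norm (z i))\<^sup>2) / real n)"
  proof (intro Bochner_Integration.integral_cong refl)
    fix f
    have "measure_pmf.expectation ?U (\<lambda>y. (norm ((v + (\<Sum>l\<in>A. z (f l))) + z y))\<^sup>2)
        = (\<Sum>i<n. (norm ((v + (\<Sum>l\<in>A. z (f l))) + z i))\<^sup>2) / real n"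
      using n by (subst integral_pmf_of_set) (auto simp: lessThan_empty_iff)
    also have "\<dots> = (norm (v + (\<Sum>l\<in>A. z (f l))))\<^sup>2 + (\<Sum>i<n. (norm (z i))\<^sup>2) / real n"
      using n by (simp only: sum_norm_sq_shift[OF z0]) (simp add: field_simps)
    finally show "measure_pmf.expectation ?U (\<lambda>y. (norm ((v + (\<Sum>l\<in>A. z (f l))) + z y))\<^sup>2)
        = (norm (v + (\<Sum>l\<in>A. z (f l))))\<^sup>2 + (\<Sum>i<n. (norm (z i))\<^sup>2) / real n" .
  qed
  also have "\<dots> = measure_pmf.expectation (Pi_pmf A d (\<lambda>_. ?U)) (\<lambda>f. (norm (v + (\<Sum>l\<in>A. z (f l))))\<^sup>2)
       + (\<Sum>i<n. (norm (z i))\<^sup>2) / real n"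
    by (subst Bochner_Integration.integral_add) (auto intro!: integrable_measure_pmf_finite fP)
  also have "\<dots> = (norm v)\<^sup>2 + real (card (insert x A)) * ((\<Sum>i<n. (norm (z i))\<^sup>2) / real n)"
    using insert by (simp add: algebra_simps add_divide_distrib)
  finally show ?case .
qed


theorem mainTheorem14:
  fixes m n b T :: nat
    and D :: "'a::euclidean_space set"
    and f chi :: "nat \<Rightarrow> 'a \<Rightarrow> real"
    and gf :: "nat \<Rightarrow> 'a \<Rightarrow> 'a"
    and L :: "nat \<Rightarrow> real"
    and F :: "nat \<Rightarrow> 'a \<Rightarrow> real"
    and gF :: "nat \<Rightarrow> 'a \<Rightarrow> 'a"
    and eta_bar :: "nat \<Rightarrow> real"
    and eta :: "nat \<Rightarrow> nat \<Rightarrow> real"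
    and x0 :: 'a
    and \<gamma> \<beta> :: real
    and x G :: "(nat \<Rightarrow> nat \<Rightarrow> nat) \<Rightarrow> nat \<Rightarrow> 'a"
    and r t :: nat
  defines "\<psi> \<equiv> (\<lambda>i y. f i y + chi i y)"
  defines "Lt \<equiv> (2 * \<gamma> - \<beta> - L 0) / 2 - (L 0)\<^sup>2 * (real T - 1) / (2 * \<beta> * real b)"
  defines "E \<equiv> (\<lambda>g. measure_pmf.expectation (lcsvrg_batches n b (r * T + t + 1)) g)"
  \<comment> \<open>chi 0 is proper, convex, lsc with effective domain D\<close>
  assumes D_ne: "D \<noteq> {}" and D_convex: "convex D"
    and chi0_convex: "convex_on D (chi 0)"
    and chi0_lsc: "closed {(y, s). y \<in> D \<and> chi 0 y \<le> s}"
  \<comment> \<open>chi i (i in [m]) convex and continuous on dom chi 0\<close>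
    and chi_convex: "\<And>i. i \<in> {1..m} \<Longrightarrow> convex_on D (chi i)"
    and chi_cont: "\<And>i. i \<in> {1..m} \<Longrightarrow> continuous_on D (chi i)"
  \<comment> \<open>f i has L i-Lipschitz gradient gf i\<close>
    and f_grad: "\<And>i y. i \<le> m \<Longrightarrow> (f i has_derivative (\<lambda>h. gf i y \<bullet> h)) (at y)"
    and f_lip: "\<And>i y z. i \<le> m \<Longrightarrow> norm (gf i y - gf i z) \<le> L i * norm (y - z)"
  \<comment> \<open>finite optimal value, nonempty compact feasible set\<close>
    and feas_ne: "{y \<in> D. \<forall>i\<in>{1..m}. \<psi> i y \<le> eta_bar i} \<noteq> {}"
    and feas_compact: "compact {y \<in> D. \<forall>i\<in>{1..m}. \<psi> i y \<le> eta_bar i}"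
    and opt_finite: "bdd_below (\<psi> 0 ` {y \<in> D. \<forall>i\<in>{1..m}. \<psi> i y \<le> eta_bar i})"
  \<comment> \<open>finite-sum setting\<close>
    and n_pos: "n \<ge> 1"
    and f0_sum: "\<And>y. f 0 y = (1 / real n) * (\<Sum>j<n. F j y)"
    and F_grad: "\<And>j y. j < n \<Longrightarrow> (F j has_derivative (\<lambda>h. gF j y \<bullet> h)) (at y)"
    and F_lip: "\<And>j y z. j < n \<Longrightarrow> norm (gF j y - gF j z) \<le> L 0 * norm (y - z)"
  \<comment> \<open>algorithm parameters and initialization\<close>
    and T_pos: "T \<ge> 1" and b_pos: "b \<ge> 1" and gamma_pos: "\<gamma> > 0"
    and x0_D: "x0 \<in> D"
    and eta0: "\<And>i. i \<in> {1..m} \<Longrightarrow> \<psi> i x0 < eta 0 i \<and> eta 0 i < eta_bar i"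
    and eta_step: "\<And>k i. i \<in> {1..m} \<Longrightarrow> eta k i < eta (Suc k) i \<and> eta (Suc k) i < eta_bar i"
    and x_init: "\<And>\<omega>. x \<omega> 0 = x0"
    and G_full: "\<And>\<omega> k. k mod T = 0 \<Longrightarrow> G \<omega> k = gf 0 (x \<omega> k)"
    and G_vr: "\<And>\<omega> k. k mod T \<noteq> 0 \<Longrightarrow>
        G \<omega> k = (1 / real b) *\<^sub>R (\<Sum>l<b. gF (\<omega> k l) (x \<omega> k) - gF (\<omega> k l) (x \<omega> (k - 1)))
                 + G \<omega> (k - 1)"
    and x_step: "\<And>\<omega> k.
        x \<omega> (Suc k) \<in> D \<and>
        (\<forall>i\<in>{1..m}. f i (x \<omega> k) + gf i (x \<omega> k) \<bullet> (x \<omega> (Suc k) - x \<omega> k)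
                      + L i / 2 * (norm (x \<omega> (Suc k) - x \<omega> k))\<^sup>2 + chi i (x \<omega> (Suc k)) \<le> eta k i) \<and>
        (\<forall>y\<in>D. (\<forall>i\<in>{1..m}. f i (x \<omega> k) + gf i (x \<omega> k) \<bullet> (y - x \<omega> k)
                      + L i / 2 * (norm (y - x \<omega> k))\<^sup>2 + chi i y \<le> eta k i) \<longrightarrow>
           G \<omega> k \<bullet> x \<omega> (Suc k) + \<gamma> / 2 * (norm (x \<omega> (Suc k) - x \<omega> k))\<^sup>2 + chi 0 (x \<omega> (Suc k))
           \<le> G \<omega> k \<bullet> y + \<gamma> / 2 * (norm (y - x \<omega> k))\<^sup>2 + chi 0 y)"
  \<comment> \<open>choice of beta\<close>
    and beta_pos: "0 < \<beta>" and beta_lt: "\<beta> < 2 * \<gamma> - L 0"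
    and Lt_pos: "Lt > 0"
  \<comment> \<open>epoch r, inner index t < T\<close>
    and t_lt: "t < T"
  shows "Lt * (\<Sum>j\<le>t. E (\<lambda>\<omega>. (norm (x \<omega> (r * T + (j + 1)) - x \<omega> (r * T + j)))\<^sup>2))
         \<le> E (\<lambda>\<omega>. \<psi> 0 (x \<omega> (r * T + 0))) - E (\<lambda>\<omega>. \<psi> 0 (x \<omega> (r * T + (t + 1))))"
  proof -
  have Lnn: "L i \<ge> 0" if "i \<le> m" for i
  proof -
    obtain v :: 'a where v: "v \<in> Basis" using nonempty_Basis by blast
    have "0 \<le> norm (gf i v - gf i 0)" by simp
    also have "\<dots> \<le> L i * norm (v - 0)" using f_lip[OF that] .
    finally show ?thesis using v by simp
  qed
  have gf0_eq: "gf 0 y = (1 / real n) *\<^sub>R (\<Sum>j<n. gF j y)" for y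
  proof -
    have d1: "(f 0 has_derivative (\<lambda>h. gf 0 y \<bullet> h)) (at y)" using f_grad by simp
    have feq: "f 0 = (\<lambda>y. (1 / real n) * (\<Sum>j<n. F j y))" using f0_sum by (rule ext)
    have d2: "(f 0 has_derivative (\<lambda>h. ((1 / real n) *\<^sub>R (\<Sum>j<n. gF j y)) \<bullet> h)) (at y)"
      unfolding feq
      by (auto intro!: derivative_eq_intros F_grad simp: inner_sum_left sum_distrib_left)
    have "(\<lambda>h. gf 0 y \<bullet> h) = (\<lambda>h. ((1 / real n) *\<^sub>R (\<Sum>j<n. gF j y)) \<bullet> h)"
      by (rule has_derivative_unique[OF d1 d2])
    hence "gf 0 y \<bullet> (gf 0 y - (1 / real n) *\<^sub>R (\<Sum>j<n. gF j y)) = ((1 / real n) *\<^sub>R (\<Sum>j<n. gF j y)) \<bullet> (gf 0 y - (1 / real n) *\<^sub>R (\<Sum>j<n. gF j y))"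
      by metis
    hence "(gf 0 y - (1 / real n) *\<^sub>R (\<Sum>j<n. gF j y)) \<bullet> (gf 0 y - (1 / real n) *\<^sub>R (\<Sum>j<n. gF j y)) = 0"
      by (simp add: inner_diff_left)
    thus ?thesis by simp
  qed
  have xD: "x om k \<in> D" for om k
    using x_step x0_D x_init by (cases k) auto
  have feas: "\<psi> i (x om k) \<le> eta k i" if i: "i \<in> {1..m}" for om k i
  proof (cases k)
    case 0 thus ?thesis using eta0[OF i] x_init[of om] by simp
  next
    case (Suc k')
    have im: "i \<le> m" using i by simp
    have "f i (x om k) \<le> f i (x om k') + gf i (x om k') \<bullet> (x om k - x om k') + L i / 2 * (norm (x om k - x om k'))\<^sup>2"
      by (rule descent[OF f_grad[OF im] f_lip[OF im]])
    moreover have "f i (x om k') + gf i (x om k') \<bullet> (x om k - x om k') + L i / 2 * (norm (x om k - x om k'))\<^sup>2 + chi i (x om k) \<le> eta k' i"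
      using x_step[of om k'] i Suc by auto
    moreover have "eta k' i < eta k i" using eta_step[OF i, of k'] Suc by simp
    ultimately show ?thesis by (simp add: \<psi>_def)
  qed
  define cons where "cons k c z \<longleftrightarrow> (\<forall>i\<in>{1..m}. f i c + gf i c \<bullet> (z - c) + L i / 2 * (norm (z - c))\<^sup>2 + chi i z \<le> eta k i)" for k c z
  define \<Phi> where "\<Phi> g c z = g \<bullet> z + \<gamma> / 2 * (norm (z - c))\<^sup>2 + chi 0 z" for g c z
  have xs: "x om (Suc k) \<in> D \<and> cons k (x om k) (x om (Suc k)) \<and>
       (\<forall>y\<in>D. cons k (x om k) y \<longrightarrow> \<Phi> (G om k) (x om k) (x om (Suc k)) \<le> \<Phi> (G om k) (x om k) y)" for om k
    using x_step[of om k] unfolding cons_def \<Phi>_def by blast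
  have seg: "u + \<tau> *\<^sub>R (y - u) = (1 - \<tau>) *\<^sub>R u + \<tau> *\<^sub>R y" for u y :: 'a and \<tau> :: real
    by (simp add: algebra_simps)
  have tp: "\<Phi> g c u + \<gamma> / 2 * (norm (y - u))\<^sup>2 \<le> \<Phi> g c y"
    if u: "u \<in> D" "cons k c u" and opt: "\<forall>z\<in>D. cons k c z \<longrightarrow> \<Phi> g c u \<le> \<Phi> g c z"
      and y: "y \<in> D" "cons k c y" for g c k u y
  proof -
    have segD: "u + \<tau> *\<^sub>R (y - u) \<in> D" if "0 < \<tau>" "\<tau> \<le> 1" for \<tau>
      unfolding seg using that u y by (intro convexD[OF D_convex]) auto
    have segC: "cons k c (u + \<tau> *\<^sub>R (y - u))" if t: "0 < \<tau>" "\<tau> \<le> 1" for \<tau>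
      unfolding cons_def
    proof
      fix i assume i: "i \<in> {1..m}"
      let ?z = "u + \<tau> *\<^sub>R (y - u)"
      have c1: "chi i ?z \<le> (1 - \<tau>) * chi i u + \<tau> * chi i y"
        unfolding seg using t u y by (intro convex_onD[OF chi_convex[OF i]]) auto
      have c2: "(norm (?z - c))\<^sup>2 \<le> (1 - \<tau>) * (norm (u - c))\<^sup>2 + \<tau> * (norm (y - c))\<^sup>2"
        unfolding quad_id using t by (simp add: mult_nonneg_nonneg)
      have c2': "L i / 2 * (norm (?z - c))\<^sup>2 \<le> (1 - \<tau>) * (L i / 2 * (norm (u - c))\<^sup>2) + \<tau> * (L i / 2 * (norm (y - c))\<^sup>2)"
      proof -
        have "L i / 2 * (norm (?z - c))\<^sup>2 \<le> L i / 2 * ((1 - \<tau>) * (norm (u - c))\<^sup>2 + \<tau> * (norm (y - c))\<^sup>2)"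
          using c2 Lnn[of i] i by (intro mult_left_mono) auto
        moreover have "L i / 2 * ((1 - \<tau>) * (norm (u - c))\<^sup>2 + \<tau> * (norm (y - c))\<^sup>2)
           = (1 - \<tau>) * (L i / 2 * (norm (u - c))\<^sup>2) + \<tau> * (L i / 2 * (norm (y - c))\<^sup>2)"
          by (simp add: field_simps)
        ultimately show ?thesis by linarith
      qed
      have c3: "gf i c \<bullet> (?z - c) = (1 - \<tau>) * (gf i c \<bullet> (u - c)) + \<tau> * (gf i c \<bullet> (y - c))"
        by (simp add: inner_diff_right inner_add_right algebra_simps)
      have ui: "f i c + gf i c \<bullet> (u - c) + L i / 2 * (norm (u - c))\<^sup>2 + chi i u \<le> eta k i"
        using u i unfolding cons_def by blast
      have yi: "f i c + gf i c \<bullet> (y - c) + L i / 2 * (norm (y - c))\<^sup>2 + chi i y \<le> eta k i"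
        using y i unfolding cons_def by blast
      have "f i c + gf i c \<bullet> (?z - c) + L i / 2 * (norm (?z - c))\<^sup>2 + chi i ?z
          \<le> (1 - \<tau>) * (f i c + gf i c \<bullet> (u - c) + L i / 2 * (norm (u - c))\<^sup>2 + chi i u)
            + \<tau> * (f i c + gf i c \<bullet> (y - c) + L i / 2 * (norm (y - c))\<^sup>2 + chi i y)"
        using c1 c2' c3 by (simp only: ring_distribs)
      also have "\<dots> \<le> (1 - \<tau>) * eta k i + \<tau> * eta k i"
        using ui yi t by (intro add_mono mult_left_mono) auto
      finally show "f i c + gf i c \<bullet> (?z - c) + L i / 2 * (norm (?z - c))\<^sup>2 + chi i ?z \<le> eta k i"
        by (simp add: algebra_simps)
    qed
    have "(g \<bullet> u + chi 0 u) + \<gamma> / 2 * (norm (u - c))\<^sup>2 + \<gamma> / 2 * (norm (y - u))\<^sup>2 \<le> (g \<bullet> y + chi 0 y) + \<gamma> / 2 * (norm (y - c))\<^sup>2"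
    proof (rule three_point[where S = "{z \<in> D. cons k c z}" and \<phi> = "\<lambda>z. g \<bullet> z + chi 0 z"])
      show "0 \<le> \<gamma>" using gamma_pos by simp
      show "u + \<tau> *\<^sub>R (y - u) \<in> {z \<in> D. cons k c z}" if "0 < \<tau>" "\<tau> \<le> 1" for \<tau>
        using segD[OF that] segC[OF that] by simp
      show "g \<bullet> (u + \<tau> *\<^sub>R (y - u)) + chi 0 (u + \<tau> *\<^sub>R (y - u)) \<le> (1 - \<tau>) * (g \<bullet> u + chi 0 u) + \<tau> * (g \<bullet> y + chi 0 y)"
        if t: "0 < \<tau>" "\<tau> \<le> 1" for \<tau>
      proof -
        have "chi 0 (u + \<tau> *\<^sub>R (y - u)) \<le> (1 - \<tau>) * chi 0 u + \<tau> * chi 0 y"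
          unfolding seg using t u y by (intro convex_onD[OF chi0_convex]) auto
        moreover have "g \<bullet> (u + \<tau> *\<^sub>R (y - u)) = (1 - \<tau>) * (g \<bullet> u) + \<tau> * (g \<bullet> y)"
          by (simp add: inner_diff_right inner_add_right algebra_simps)
        ultimately show ?thesis by (simp add: algebra_simps)
      qed
      show "g \<bullet> u + chi 0 u + \<gamma> / 2 * (norm (u - c))\<^sup>2 \<le> g \<bullet> z + chi 0 z + \<gamma> / 2 * (norm (z - c))\<^sup>2"
        if "z \<in> {z \<in> D. cons k c z}" for z
        using opt that unfolding \<Phi>_def by (auto simp: algebra_simps)
    qed
    thus ?thesis unfolding \<Phi>_def by (simp add: algebra_simps)
  qed
  have uniq: "u = u'"
    if u: "u \<in> D" "cons k c u" "\<forall>z\<in>D. cons k c z \<longrightarrow> \<Phi> g c u \<le> \<Phi> g c z"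
      and u': "u' \<in> D" "cons k c u'" "\<forall>z\<in>D. cons k c z \<longrightarrow> \<Phi> g c u' \<le> \<Phi> g c z" for k c g u u'
  proof -
    have "\<Phi> g c u + \<gamma> / 2 * (norm (u' - u))\<^sup>2 \<le> \<Phi> g c u'" by (rule tp[OF u u'(1,2)])
    moreover have "\<Phi> g c u' + \<gamma> / 2 * (norm (u - u'))\<^sup>2 \<le> \<Phi> g c u" by (rule tp[OF u' u(1,2)])
    ultimately have "\<gamma> * (norm (u - u'))\<^sup>2 \<le> 0" by (simp add: norm_minus_commute)
    hence "(norm (u - u'))\<^sup>2 \<le> 0" using gamma_pos by (simp add: mult_le_0_iff)
    thus ?thesis by simp
  qed
  have adapt: "(\<forall>om om'. (\<forall>j<k. om j = om' j) \<longrightarrow> x om k = x om' k) \<and>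
               (\<forall>om om'. (\<forall>j\<le>k. om j = om' j) \<longrightarrow> G om k = G om' k)" for k
  proof (induction k)
    case 0
    show ?case using x_init G_full[where k=0] by simp
  next
    case (Suc k)
    have C: "x om (Suc k) = x om' (Suc k)" if h: "\<forall>j<Suc k. om j = om' j" for om om'
    proof -
      have xk: "x om k = x om' k" using Suc.IH h by auto
      have Gk: "G om k = G om' k" using Suc.IH h by auto
      show ?thesis using xs[of om k] xs[of om' k] unfolding xk Gk
        by (intro uniq) blast+
    qed
    have Dd: "G om (Suc k) = G om' (Suc k)" if h: "\<forall>j\<le>Suc k. om j = om' j" for om om'
    proof (cases "Suc k mod T = 0")
      case True
      thus ?thesis using G_full[OF True, of om] G_full[OF True, of om'] C[of om om'] h by simp
    next
      case False
      have xk: "x om k = x om' k" using Suc.IH h by auto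
      have Gk: "G om k = G om' k" using Suc.IH h by auto
      have o: "om (Suc k) = om' (Suc k)" using h by simp
      show ?thesis using G_vr[OF False, of om] G_vr[OF False, of om'] C[of om om'] h xk Gk o by simp
    qed
    show ?case using C Dd by blast
  qed
  have descent_pt: "\<psi> 0 (x om (Suc k)) \<le> \<psi> 0 (x om k) - (2 * \<gamma> - \<beta> - L 0) / 2 * (norm (x om (Suc k) - x om k))\<^sup>2
        + 1 / (2 * \<beta>) * (norm (G om k - gf 0 (x om k)))\<^sup>2" for om k
  proof -
    define u where "u = x om (Suc k)"
    define c where "c = x om k"
    define g where "g = G om k"
    have cD: "c \<in> D" using xD by (simp add: c_def)
    have cc: "cons k c c" unfolding cons_def using feas[of _ om k] by (simp add: c_def \<psi>_def)
    have "\<Phi> g c u + \<gamma> / 2 * (norm (c - u))\<^sup>2 \<le> \<Phi> g c c"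
      using xs[of om k] cD cc unfolding u_def c_def g_def by (intro tp) blast+
    hence chi_u: "chi 0 u \<le> g \<bullet> c + chi 0 c - g \<bullet> u - \<gamma> * (norm (u - c))\<^sup>2"
      unfolding \<Phi>_def by (simp add: norm_minus_commute)
    have f0u: "f 0 u \<le> f 0 c + gf 0 c \<bullet> (u - c) + L 0 / 2 * (norm (u - c))\<^sup>2"
      by (rule descent[OF f_grad f_lip]) auto
    define e where "e = g - gf 0 c"
    have cs: "(gf 0 c - g) \<bullet> (u - c) \<le> norm e * norm (u - c)"
      using norm_cauchy_schwarz[of "gf 0 c - g" "u - c"] by (simp add: e_def norm_minus_commute)
    have amgm: "norm e * norm (u - c) \<le> (norm e)\<^sup>2 / (2 * \<beta>) + \<beta> / 2 * (norm (u - c))\<^sup>2"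
    proof -
      have "0 \<le> (norm e - \<beta> * norm (u - c))\<^sup>2 / (2 * \<beta>)" using beta_pos by simp
      also have "\<dots> = (norm e)\<^sup>2 / (2 * \<beta>) + \<beta> / 2 * (norm (u - c))\<^sup>2 - norm e * norm (u - c)"
        using beta_pos by (simp add: field_simps power2_eq_square)
      finally show ?thesis by simp
    qed
    have "\<psi> 0 u \<le> \<psi> 0 c + (gf 0 c - g) \<bullet> (u - c) + (L 0 / 2 - \<gamma>) * (norm (u - c))\<^sup>2"
      using chi_u f0u unfolding \<psi>_def by (simp add: inner_diff_left inner_diff_right algebra_simps)
    also have "\<dots> \<le> \<psi> 0 c + ((norm e)\<^sup>2 / (2 * \<beta>) + \<beta> / 2 * (norm (u - c))\<^sup>2) + (L 0 / 2 - \<gamma>) * (norm (u - c))\<^sup>2"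
      using cs amgm by simp
    also have "\<dots> = \<psi> 0 c - (2 * \<gamma> - \<beta> - L 0) / 2 * (norm (u - c))\<^sup>2 + 1 / (2 * \<beta>) * (norm e)\<^sup>2"
      by (simp add: field_simps)
    finally show ?thesis by (simp add: u_def c_def e_def g_def)
  qed
  define K where "K = r * T + t + 1"
  define U where "U = pmf_of_set {..<n}"
  define Q where "Q = Pi_pmf {..<b} (0::nat) (\<lambda>_. U)"
  define M where "M = Pi_pmf {..<K} (\<lambda>_. 0) (\<lambda>_. Q)"
  have EM: "E g = measure_pmf.expectation M g" for g
    unfolding E_def M_def Q_def U_def K_def lcsvrg_batches_def by simp
  have fU: "finite (set_pmf U)" using n_pos unfolding U_def by (subst set_pmf_of_set) (auto simp: lessThan_empty_iff)
  have fQ: "finite (set_pmf Q)" unfolding Q_def using fU by (intro finite_set_Pi_pmf) auto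
  have fM: "finite (set_pmf M)" unfolding M_def using fQ by (intro finite_set_Pi_pmf) auto
  have intM: "integrable (measure_pmf M) g" for g :: "_ \<Rightarrow> real" by (rule integrable_measure_pmf_finite[OF fM])
  define dd where "dd k om = (norm (x om (Suc k) - x om k))\<^sup>2" for k om
  define ee where "ee k om = (norm (G om k - gf 0 (x om k)))\<^sup>2" for k om
  define A where "A = (2 * \<gamma> - \<beta> - L 0) / 2"
  define cc where "cc = (L 0)\<^sup>2 / real b"
  have E1: "E (\<lambda>om. \<psi> 0 (x om (Suc k))) \<le> E (\<lambda>om. \<psi> 0 (x om k)) - A * E (dd k) + 1 / (2 * \<beta>) * E (ee k)" for k
  proof -
    have "E (\<lambda>om. \<psi> 0 (x om (Suc k))) \<le> E (\<lambda>om. \<psi> 0 (x om k) - A * dd k om + 1 / (2 * \<beta>) * ee k om)"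
      unfolding EM using descent_pt by (intro integral_mono intM) (simp add: A_def dd_def ee_def)
    also have "\<dots> = E (\<lambda>om. \<psi> 0 (x om k)) - A * E (dd k) + 1 / (2 * \<beta>) * E (ee k)"
      unfolding EM by (simp add: intM)
    finally show ?thesis .
  qed
  have split: "E h = measure_pmf.expectation (Pi_pmf ({..<K} - {k}) (\<lambda>_. 0) (\<lambda>_. Q))
        (\<lambda>om. measure_pmf.expectation Q (\<lambda>c. h (om(k := c))))" if kK: "k < K" for h k
    unfolding EM M_def by (rule Pi_split) (use kK fQ in auto)
  have nodep: "E g = measure_pmf.expectation (Pi_pmf ({..<K} - {k}) (\<lambda>_. 0) (\<lambda>_. Q)) g"
    if kK: "k < K" and g: "\<And>om c. g (om(k := c)) = g om" for g k
    unfolding split[OF kK] g by simp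
  have gsum: "(\<Sum>j<n. gF j y) = real n *\<^sub>R gf 0 y" for y
    using n_pos by (simp add: gf0_eq)
  have var_sum: "(\<Sum>i<n. (norm (w i - (1 / real n) *\<^sub>R (\<Sum>j<n. w j)))\<^sup>2) \<le> (\<Sum>i<n. (norm (w i))\<^sup>2)"
    for w :: "nat \<Rightarrow> 'a"
  proof -
    define wb where "wb = (1 / real n) *\<^sub>R (\<Sum>j<n. w j)"
    have z0: "(\<Sum>i<n. w i - wb) = 0"
      using n_pos by (simp add: sum_subtractf wb_def sum_constant_scaleR)
    have "(\<Sum>i<n. (norm (w i))\<^sup>2) = (\<Sum>i<n. (norm (wb + (w i - wb)))\<^sup>2)" by simp
    also have "\<dots> = real n * (norm wb)\<^sup>2 + (\<Sum>i<n. (norm (w i - wb))\<^sup>2)"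
      by (rule sum_norm_sq_shift[OF z0])
    finally show ?thesis unfolding wb_def[symmetric] by simp
  qed
  have E2: "E (ee k) \<le> E (ee (k - 1)) + cc * E (dd (k - 1))" if kK: "k < K" and kT: "k mod T \<noteq> 0" for k
  proof -
    have k1: "k \<ge> 1" using kT by (cases k) auto
    define M' where "M' = Pi_pmf ({..<K} - {k}) (\<lambda>_. 0) (\<lambda>_. Q)"
    have fM': "finite (set_pmf M')" unfolding M'_def using fQ by (intro finite_set_Pi_pmf) auto
    have inner: "measure_pmf.expectation Q (\<lambda>c. ee k (om(k := c))) \<le> ee (k - 1) om + cc * dd (k - 1) om" for om
    proof -
      define xk where "xk = x om k"
      define xk1 where "xk1 = x om (k - 1)"
      have ag: "\<forall>j<k. (om(k := c)) j = om j" for c by simp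
      have ag1: "\<forall>j\<le>k - 1. (om(k := c)) j = om j" for c using k1 by auto
      have X1: "x (om(k := c)) k = xk" for c using adapt[of k] ag[of c] unfolding xk_def by blast
      have ag2: "\<forall>j<k - 1. (om(k := c)) j = om j" for c by auto
      have X2: "x (om(k := c)) (k - 1) = xk1" for c using adapt[of "k - 1"] ag2[of c] unfolding xk1_def by blast
      have X3: "G (om(k := c)) (k - 1) = G om (k - 1)" for c using adapt[of "k - 1"] ag1[of c] by blast
      define v where "v = G om (k - 1) - gf 0 xk1"
      define z where "z i = (1 / real b) *\<^sub>R (gF i xk - gF i xk1 - (gf 0 xk - gf 0 xk1))" for i
      have bpos: "real b > 0" using b_pos by simp
      have e_eq: "G (om(k := c)) k - gf 0 (x (om(k := c)) k) = v + (\<Sum>l\<in>{..<b}. z (c l))" for c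
      proof -
        have "(\<Sum>l\<in>{..<b}. z (c l)) = (1 / real b) *\<^sub>R (\<Sum>l<b. gF (c l) xk - gF (c l) xk1) - (gf 0 xk - gf 0 xk1)"
          using bpos by (simp add: z_def scaleR_sum_right[symmetric] sum_subtractf sum_constant_scaleR scaleR_diff_right)
        thus ?thesis using G_vr[OF kT, of "om(k := c)"] X1 X2 X3 unfolding v_def by (simp add: algebra_simps)
      qed
      have z0: "(\<Sum>i<n. z i) = 0"
        by (simp only: z_def scaleR_sum_right[symmetric] sum_subtractf sum_constant_scaleR gsum card_lessThan) (simp add: scaleR_diff_right)
      have "measure_pmf.expectation Q (\<lambda>c. ee k (om(k := c)))
          = measure_pmf.expectation Q (\<lambda>c. (norm (v + (\<Sum>l\<in>{..<b}. z (c l))))\<^sup>2)"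
        unfolding ee_def e_eq ..
      also have "\<dots> = (norm v)\<^sup>2 + real b * ((\<Sum>i<n. (norm (z i))\<^sup>2) / real n)"
        unfolding Q_def U_def by (subst indep_sum[OF _ n_pos z0]) auto
      also have "real b * ((\<Sum>i<n. (norm (z i))\<^sup>2) / real n) \<le> cc * (norm (xk - xk1))\<^sup>2"
      proof -
        define w where "w i = gF i xk - gF i xk1" for i
        have wb: "(1 / real n) *\<^sub>R (\<Sum>j<n. w j) = gf 0 xk - gf 0 xk1"
          using n_pos by (simp add: w_def sum_subtractf gsum algebra_simps)
        have "(\<Sum>i<n. (norm (z i))\<^sup>2) = (1 / real b)\<^sup>2 * (\<Sum>i<n. (norm (w i - (1 / real n) *\<^sub>R (\<Sum>j<n. w j)))\<^sup>2)"
          unfolding wb by (simp add: z_def w_def sum_distrib_left power_mult_distrib power_divide)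
        also have "\<dots> \<le> (1 / real b)\<^sup>2 * (\<Sum>i<n. (norm (w i))\<^sup>2)"
          by (intro mult_left_mono var_sum) auto
        also have "(\<Sum>i<n. (norm (w i))\<^sup>2) \<le> (\<Sum>i<n. (L 0 * norm (xk - xk1))\<^sup>2)"
        proof (intro sum_mono)
          fix i assume "i \<in> {..<n}"
          hence "norm (w i) \<le> L 0 * norm (xk - xk1)" using F_lip unfolding w_def by auto
          thus "(norm (w i))\<^sup>2 \<le> (L 0 * norm (xk - xk1))\<^sup>2" by (intro power_mono) auto
        qed
        hence "(1 / real b)\<^sup>2 * (\<Sum>i<n. (norm (w i))\<^sup>2) \<le> (1 / real b)\<^sup>2 * (\<Sum>i<n. (L 0 * norm (xk - xk1))\<^sup>2)"
          by (intro mult_left_mono) auto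
        finally have "(\<Sum>i<n. (norm (z i))\<^sup>2) \<le> (1 / real b)\<^sup>2 * (real n * (L 0 * norm (xk - xk1))\<^sup>2)" by simp
        hence "real b * ((\<Sum>i<n. (norm (z i))\<^sup>2) / real n) \<le> real b * (((1 / real b)\<^sup>2 * (real n * (L 0 * norm (xk - xk1))\<^sup>2)) / real n)"
          using n_pos by (intro mult_left_mono divide_right_mono) auto
        also have "\<dots> = cc * (norm (xk - xk1))\<^sup>2"
          using n_pos bpos by (simp add: cc_def field_simps power2_eq_square)
        finally show ?thesis .
      qed
      finally have "measure_pmf.expectation Q (\<lambda>c. ee k (om(k := c))) \<le> (norm v)\<^sup>2 + cc * (norm (xk - xk1))\<^sup>2"
        by simp
      moreover have "(norm v)\<^sup>2 = ee (k - 1) om" unfolding v_def ee_def xk1_def ..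
      moreover have "(norm (xk - xk1))\<^sup>2 = dd (k - 1) om" unfolding dd_def xk_def xk1_def using k1 by simp
      ultimately show ?thesis by simp
    qed
    have "E (ee k) = measure_pmf.expectation M' (\<lambda>om. measure_pmf.expectation Q (\<lambda>c. ee k (om(k := c))))"
      unfolding M'_def by (rule split[OF kK])
    also have "\<dots> \<le> measure_pmf.expectation M' (\<lambda>om. ee (k - 1) om + cc * dd (k - 1) om)"
      by (intro integral_mono integrable_measure_pmf_finite[OF fM'] inner)
    also have "\<dots> = E (\<lambda>om. ee (k - 1) om + cc * dd (k - 1) om)"
    proof (rule nodep[OF kK, symmetric, folded M'_def])
      fix om and c :: "nat \<Rightarrow> nat"
      have ag1: "\<forall>j\<le>k - 1. (om(k := c)) j = om j" using k1 by auto
      have ag: "\<forall>j<k. (om(k := c)) j = om j" by simp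
      have "x (om(k := c)) (Suc (k - 1)) = x om (Suc (k - 1))" using adapt[of k] ag k1 by simp
      moreover have "x (om(k := c)) (k - 1) = x om (k - 1)" using adapt[of "k - 1"] ag1 by auto
      moreover have "G (om(k := c)) (k - 1) = G om (k - 1)" using adapt[of "k - 1"] ag1 by blast
      ultimately show "ee (k - 1) (om(k := c)) + cc * dd (k - 1) (om(k := c)) = ee (k - 1) om + cc * dd (k - 1) om"
        unfolding ee_def dd_def by simp
    qed
    also have "\<dots> = E (ee (k - 1)) + cc * E (dd (k - 1))"
      unfolding EM by (simp add: intM)
    finally show ?thesis .
  qed
  have Edd: "E (dd k) \<ge> 0" for k unfolding EM dd_def by (intro integral_nonneg_AE) auto
  have cc0: "cc \<ge> 0" unfolding cc_def by simp
  have E3: "E (ee (r * T + j)) \<le> cc * (\<Sum>i<j. E (dd (r * T + i)))" if "j \<le> t" for j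
    using that
  proof (induction j)
    case 0
    have "ee (r * T) = (\<lambda>_. 0)"
      using G_full[of "r * T"] unfolding ee_def by (simp add: fun_eq_iff)
    hence "E (ee (r * T)) = 0" unfolding EM by simp
    thus ?case by simp
  next
    case (Suc j)
    have kK: "r * T + Suc j < K" using Suc.prems unfolding K_def by simp
    have kT: "(r * T + Suc j) mod T \<noteq> 0" using Suc.prems t_lt by simp
    have "E (ee (r * T + Suc j)) \<le> E (ee (r * T + j)) + cc * E (dd (r * T + j))"
      using E2[OF kK kT] by simp
    also have "\<dots> \<le> cc * (\<Sum>i<j. E (dd (r * T + i))) + cc * E (dd (r * T + j))"
      using Suc by simp
    also have "\<dots> = cc * (\<Sum>i<Suc j. E (dd (r * T + i)))" by (simp add: algebra_simps)
    finally show ?case .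
  qed
  have E4: "E (\<lambda>om. \<psi> 0 (x om (r * T + Suc j))) \<le> E (\<lambda>om. \<psi> 0 (x om (r * T)))
      - A * (\<Sum>i\<le>j. E (dd (r * T + i))) + 1 / (2 * \<beta>) * (\<Sum>i\<le>j. E (ee (r * T + i)))" for j
  proof (induction j)
    case 0
    show ?case using E1[of "r * T"] by simp
  next
    case (Suc j)
    show ?case using Suc E1[of "r * T + Suc j"] by (simp add: algebra_simps)
  qed
  have W: "(\<Sum>j\<le>s. \<Sum>i<j. a i) \<le> real s * (\<Sum>i\<le>s. a i)" if a: "\<And>i. a i \<ge> (0::real)" for a s
  proof (induction s)
    case 0 show ?case by simp
  next
    case (Suc s)
    have "(\<Sum>j\<le>Suc s. \<Sum>i<j. a i) = (\<Sum>j\<le>s. \<Sum>i<j. a i) + (\<Sum>i\<le>s. a i)"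
      by (simp add: lessThan_Suc_atMost)
    also have "\<dots> \<le> real s * (\<Sum>i\<le>s. a i) + (\<Sum>i\<le>s. a i)" using Suc by simp
    also have "\<dots> = real (Suc s) * (\<Sum>i\<le>s. a i)" by (simp add: algebra_simps)
    also have "\<dots> \<le> real (Suc s) * (\<Sum>i\<le>Suc s. a i)"
      using a by (intro mult_left_mono sum_mono2) auto
    finally show ?case .
  qed
  define S where "S = (\<Sum>i\<le>t. E (dd (r * T + i)))"
  have S0: "S \<ge> 0" unfolding S_def using Edd by (simp add: sum_nonneg)
  have Vs: "(\<Sum>i\<le>t. E (ee (r * T + i))) \<le> cc * (real T - 1) * S"
  proof -
    have "(\<Sum>i\<le>t. E (ee (r * T + i))) \<le> (\<Sum>j\<le>t. cc * (\<Sum>i<j. E (dd (r * T + i))))"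
      by (intro sum_mono E3) auto
    also have "\<dots> = cc * (\<Sum>j\<le>t. \<Sum>i<j. E (dd (r * T + i)))" by (simp add: sum_distrib_left)
    also have "\<dots> \<le> cc * (real t * S)"
      unfolding S_def by (intro mult_left_mono W Edd cc0)
    also have "\<dots> \<le> cc * ((real T - 1) * S)"
      using t_lt S0 cc0 by (intro mult_left_mono mult_right_mono) auto
    finally show ?thesis by simp
  qed
  have main: "E (\<lambda>om. \<psi> 0 (x om (r * T + Suc t))) \<le> E (\<lambda>om. \<psi> 0 (x om (r * T))) - A * S + 1 / (2 * \<beta>) * (cc * (real T - 1) * S)"
  proof -
    have "1 / (2 * \<beta>) * (\<Sum>i\<le>t. E (ee (r * T + i))) \<le> 1 / (2 * \<beta>) * (cc * (real T - 1) * S)"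
      using Vs beta_pos by (intro mult_left_mono) auto
    thus ?thesis using E4[of t] unfolding S_def by linarith
  qed
  have LtA: "Lt = A - 1 / (2 * \<beta>) * (cc * (real T - 1))"
    unfolding Lt_def A_def cc_def using beta_pos b_pos by (simp add: field_simps)
  have goalS: "(\<Sum>j\<le>t. E (\<lambda>om. (norm (x om (r * T + (j + 1)) - x om (r * T + j)))\<^sup>2)) = S"
    unfolding S_def dd_def by simp
  have LS: "Lt * S = A * S - 1 / (2 * \<beta>) * (cc * (real T - 1) * S)"
    unfolding LtA by (simp add: algebra_simps add_divide_distrib diff_divide_distrib)
  have e1: "r * T + (t + 1) = r * T + Suc t" by simp
  show ?thesis unfolding goalS e1 using main LS by simp
qed
end
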